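(* Let $p$ be a prime, $n\ge1$, $s\ge0$ integers, and $f:\mathbb{F}_{p^n}\to\mathbb{F}_p$. Let $M=(m_{x,y})_{x,y\in\mathbb{F}_{p^n}}$ be the $p^n\times p^n$ matrix with $m_{x,y}=\zeta_p^{f(x+y)}$. Then $f$ is $s$-plateaued if and only if $MM^*M=p^{n+s}M$, where $M^*$ is the conjugate transpose of $M$.
   Context: $\zeta_p=e^{2\pi i/p}$, $Tr_n(z)=\sum_{i=0}^{n-1}z^{p^i}$. The Walsh transform is $\widehat f(\mu)=\sum_{x\in\mathbb{F}_{p^n}}\zeta_p^{f(x)-Tr_n(\mu x)}$. $f$ is $s$-plateaued if $|\widehat f(\mu)|\in\{0,p^{(n+s)/2}\}$ for all $\mu\in\mathbb{F}_{p^n}$. *)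

theory Defs
  imports "HOL-Analysis.Analysis"
begin

text \<open>The finite field F_{p^n} is modelled by a finite field type 'a with CARD('a) = p^n.
  F_p is its prime subfield, i.e. the image of of_nat.\<close>

definition prime_subfield :: "'a::field set" where
  "prime_subfield = range of_nat"

text \<open>zeta_p^y for y in the prime subfield: y is identified with the least natural k
  with of_nat k = y (so 0 <= k < p).\<close>
definition zeta_pow :: "nat \<Rightarrow> 'a::field \<Rightarrow> complex" where
  "zeta_pow p y = cis (2 * pi * real (LEAST k::nat. of_nat k = y) / real p)"

definition trace_n :: "nat \<Rightarrow> nat \<Rightarrow> 'a::field \<Rightarrow> 'a" where
  "trace_n p n z = (\<Sum>i<n. z ^ (p ^ i))"

definition walsh :: "nat \<Rightarrow> nat \<Rightarrow> ('a::{field,finite} \<Rightarrow> 'a) \<Rightarrow> 'a \<Rightarrow> complex" where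
  "walsh p n f \<mu> = (\<Sum>x\<in>UNIV. zeta_pow p (f x - trace_n p n (\<mu> * x)))"

definition plateaued :: "nat \<Rightarrow> nat \<Rightarrow> nat \<Rightarrow> ('a::{field,finite} \<Rightarrow> 'a) \<Rightarrow> bool" where
  "plateaued p n s f \<longleftrightarrow>
     (\<forall>\<mu>. cmod (walsh p n f \<mu>) \<in> {0, real p powr (real (n + s) / 2)})"

definition conj_transpose :: "((complex, 'n::finite) vec, 'm::finite) vec \<Rightarrow> ((complex, 'm) vec, 'n) vec" where
  "conj_transpose A = (\<chi> i j. cnj (A $ j $ i))"

definition plat_matrix :: "nat \<Rightarrow> ('a::{field,finite} \<Rightarrow> 'a) \<Rightarrow> ((complex, 'a) vec, 'a) vec" where
  "plat_matrix p f = (\<chi> x y. zeta_pow p (f (x + y)))"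

end

theory Submission
  imports Defs "HOL-Number_Theory.Cong" "HOL-Computational_Algebra.Polynomial" "HOL-Library.Real_Mod"
begin

lemma of_nat_card_zero: "(of_nat CARD('a) :: 'a::{ring_1,finite}) = 0"
proof -
  have "(\<Sum>x\<in>(UNIV::'a set). x + 1) = (\<Sum>x\<in>UNIV. x)"
    by (rule sum.reindex_bij_witness[of _ "\<lambda>x. x - 1" "\<lambda>x. x + 1"]) auto
  thus ?thesis by (simp add: sum.distrib)
qed

lemma CHAR_dvd_CARD': "CHAR('a::{ring_1,finite}) dvd CARD('a)"
  using of_nat_card_zero[where ?'a='a] of_nat_eq_0_iff_char_dvd by blast

locale ctx =
  fixes p n :: nat and ty :: "'a::{field,finite} itself"
  assumes p_prime: "prime p" and n_ge: "n \<ge> 1" and card_a: "CARD('a) = p ^ n"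
begin

lemma char_eq: "CHAR('a) = p"
proof -
  have "CHAR('a) > 0" by (simp add: finite_imp_CHAR_pos)
  hence pc: "prime CHAR('a)" by (rule prime_CHAR_semidom)
  have "CHAR('a) dvd p ^ n" using CHAR_dvd_CARD'[where ?'a='a] card_a by simp
  hence "CHAR('a) dvd p" using pc prime_dvd_power by blast
  thus ?thesis using pc p_prime by (simp add: primes_dvd_imp_eq)
qed

lemma prime_char: "prime CHAR('a)" using char_eq p_prime by simp

lemma p_gt1: "p > 1" using p_prime prime_gt_1_nat by blast

lemma of_nat_eq_cong: "(of_nat x :: 'a) = of_nat y \<longleftrightarrow> [x = y] (mod p)"
  using of_nat_eq_iff_cong_CHAR[where ?'a='a] char_eq by simp

lemma of_nat_p: "(of_nat p :: 'a) = 0"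
  using of_nat_CHAR[where ?'a='a] char_eq by simp

lemma pow_card: "(x::'a) ^ CARD('a) = x"
proof (cases "x = 0")
  case False
  have "x * (\<Prod>y\<in>UNIV-{0}. x * y) = x * x ^ (card (UNIV :: 'a set) - 1) * \<Prod>(UNIV-{0})"
    by (simp add: prod.distrib mult_ac)
  also have "x * x ^ (card (UNIV :: 'a set) - 1) = x ^ Suc (card (UNIV :: 'a set) - 1)"
    by (subst power_Suc) auto
  also have "Suc (card (UNIV :: 'a set) - 1) = card (UNIV :: 'a set)"
    using finite_UNIV_card_ge_0[where ?'a = 'a] by simp
  also have "(\<Prod>y\<in>UNIV-{0}. x * y) = (\<Prod>y\<in>UNIV-{0}. y)"
    by (rule prod.reindex_bij_witness[of _ "\<lambda>y. y / x" "\<lambda>y. x * y"]) (use False in auto)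
  finally show ?thesis
    by simp
qed (use finite_UNIV_card_ge_0[where ?'a = 'a] in auto)

definition T :: "'a \<Rightarrow> 'a" where "T = trace_n p n"

lemma T_add: "T (a + b) = T a + T b"
  unfolding T_def trace_n_def
  by (simp add: sum.distrib freshmans_dream'[OF prime_char, where n=i for i] char_eq)

lemma T_zero: "T 0 = 0"
  unfolding T_def trace_n_def using p_gt1 by (simp add: power_0_left)

lemma T_neg: "T (- a) = - T a"
  using T_add[of a "-a"] T_zero by (simp add: eq_neg_iff_add_eq_0 add.commute)

lemma T_pow: "T a ^ p = T a"
proof -
  have "T a ^ p = (\<Sum>i<n. (a ^ p ^ i) ^ p)"
    unfolding T_def trace_n_def by (rule freshmans_dream_sum) (auto simp: prime_char char_eq p_prime)
  also have "\<dots> = (\<Sum>i<n. a ^ p ^ Suc i)"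
    by (simp add: power_mult[symmetric] mult.commute)
  also have "\<dots> = (\<Sum>i\<in>Suc ` {..<n}. a ^ p ^ i)"
    by (simp add: sum.reindex)
  also have "Suc ` {..<n} = insert n {1..<n}" using n_ge by (auto simp: image_Suc_lessThan)
  also have "(\<Sum>i\<in>insert n {1..<n}. a ^ p ^ i) = (\<Sum>i\<in>{1..<n}. a ^ p ^ i) + a"
    using pow_card card_a by (simp add: add.commute)
  also have "\<dots> = T a"
  proof -
    have "{..<n} = insert 0 {1..<n}" using n_ge by auto
    thus ?thesis unfolding T_def trace_n_def by (simp add: add.commute)
  qed
  finally show ?thesis .
qed

lemma P_eq: "(prime_subfield :: 'a set) = of_nat ` {..<p}"
  unfolding prime_subfield_def
proof (auto)
  fix k :: nat
  have "(of_nat k :: 'a) = of_nat (k mod p)" using of_nat_eq_cong by (simp add: cong_def)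
  moreover have "k mod p < p" using p_gt1 by simp
  ultimately show "(of_nat k :: 'a) \<in> of_nat ` {..<p}" by blast
qed

lemma card_P: "card (prime_subfield :: 'a set) = p"
proof -
  have "inj_on (of_nat :: nat \<Rightarrow> 'a) {..<p}"
    by (auto simp: inj_on_def of_nat_eq_cong cong_def)
  thus ?thesis by (simp add: P_eq card_image)
qed

lemma of_nat_pow_p: "(of_nat k :: 'a) ^ p = of_nat k"
proof (induction k)
  case 0 then show ?case using p_gt1 by (simp add: power_0_left)
next
  case (Suc k)
  have "(of_nat k + 1 :: 'a) ^ p = of_nat k ^ p + 1 ^ p" by (rule freshmans_dream) (auto simp: char_eq p_prime)
  thus ?case using Suc by (simp add: add.commute)
qed

lemma pow_p_in_P: assumes "(y::'a) ^ p = y" shows "y \<in> prime_subfield"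
proof -
  define Q :: "'a poly" where "Q = Polynomial.monom 1 p - [:0,1:]"
  have polyQ: "poly Q x = x ^ p - x" for x by (simp add: Q_def poly_monom)
  have "coeff Q p = 1" using p_gt1 by (cases p) (auto simp: Q_def coeff_monom coeff_pCons split: nat.split)
  hence Q0: "Q \<noteq> 0" by auto
  have "degree Q \<le> p" unfolding Q_def
    using degree_diff_le[of "Polynomial.monom (1::'a) p" p "[:0,1:]"] p_gt1 by (simp add: degree_monom_le)
  hence cardR: "card {x. poly Q x = 0} \<le> p" using card_poly_roots_bound[OF Q0] by linarith
  have sub: "prime_subfield \<subseteq> {x. poly Q x = 0}"
    by (auto simp: prime_subfield_def polyQ of_nat_pow_p)
  have fin: "finite {x. poly Q x = 0}" by simp
  have "prime_subfield = {x. poly Q x = 0}"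
    using card_subset_eq[OF fin sub] card_P cardR card_mono[OF fin sub] by linarith
  thus ?thesis using assms polyQ by auto
qed

lemma T_in_P: "T a \<in> prime_subfield" using pow_p_in_P T_pow by blast

lemma T_nontriv: "\<exists>a. T a \<noteq> 0"
proof (rule ccontr)
  assume "\<not> ?thesis"
  hence allz: "T a = 0" for a by auto
  define Q :: "'a poly" where "Q = (\<Sum>i<n. Polynomial.monom 1 (p ^ i))"
  have polyQ: "poly Q x = T x" for x by (simp add: Q_def T_def trace_n_def poly_sum poly_monom)
  have inj: "p ^ i = p ^ j \<longleftrightarrow> i = j" for i j using p_gt1 by simp
  have "coeff Q (p ^ (n - 1)) = (\<Sum>i<n. if p ^ i = p ^ (n - 1) then 1 else 0)"
    by (simp add: Q_def coeff_sum coeff_monom)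
  also have "\<dots> = 1" using n_ge by (simp add: inj)
  finally have Q0: "Q \<noteq> 0" by auto
  have "degree Q \<le> p ^ (n - 1)" unfolding Q_def
  proof (rule degree_sum_le)
    fix i assume "i \<in> {..<n}"
    hence "p ^ i \<le> p ^ (n - 1)" using p_gt1 by (intro power_increasing) auto
    thus "degree (Polynomial.monom (1::'a) (p ^ i)) \<le> p ^ (n - 1)" by (simp add: degree_monom_eq)
  qed simp
  moreover have "p ^ (n - 1) < p ^ n" using p_gt1 n_ge by (intro power_strict_increasing) auto
  moreover have "card {x. poly Q x = 0} \<le> degree Q" by (rule card_poly_roots_bound[OF Q0])
  moreover have "{x. poly Q x = 0} = UNIV" using allz polyQ by auto
  ultimately show False using card_a by simp
qed

lemma cis_mod: "cis (2 * pi * real j / real p) = cis (2 * pi * real (j mod p) / real p)"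
proof -
  have j: "real j = real (j div p) * real p + real (j mod p)"
    by (metis div_mult_mod_eq of_nat_add of_nat_mult)
  have "2 * pi * real j / real p = 2 * pi * real (j div p) + 2 * pi * real (j mod p) / real p"
    using p_gt1 by (simp add: j field_simps)
  hence "cis (2 * pi * real j / real p) = cis (2 * pi * real (j div p)) * cis (2 * pi * real (j mod p) / real p)"
    by (metis cis_mult)
  also have "cis (2 * pi * real (j div p)) = 1"
    by (metis Ints_of_nat cis_multiple_2pi)
  finally show ?thesis by simp
qed

lemma e_of_nat: "zeta_pow p (of_nat k :: 'a) = cis (2 * pi * real k / real p)"
proof -
  define j where "j = (LEAST j::nat. (of_nat j :: 'a) = of_nat k)"
  have "(of_nat j :: 'a) = of_nat k" unfolding j_def by (rule LeastI[of _ k]) simp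
  hence "j mod p = k mod p" by (simp add: of_nat_eq_cong cong_def)
  hence "cis (2 * pi * real j / real p) = cis (2 * pi * real k / real p)"
    by (metis cis_mod)
  thus ?thesis by (simp add: zeta_pow_def j_def)
qed

lemma P_of_nat: "a \<in> prime_subfield \<Longrightarrow> \<exists>k. a = (of_nat k :: 'a)"
  by (auto simp: prime_subfield_def)

lemma P_add: "a \<in> prime_subfield \<Longrightarrow> b \<in> prime_subfield \<Longrightarrow> (a + b :: 'a) \<in> prime_subfield"
  unfolding prime_subfield_def by (auto simp flip: of_nat_add)

lemma neg_of_nat: "- (of_nat k :: 'a) = of_nat ((p - 1) * k)"
proof -
  have "(of_nat ((p - 1) * k) :: 'a) + of_nat k = of_nat (p * k)"
    using p_gt1 by (simp flip: of_nat_add add: algebra_simps)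
  also have "\<dots> = 0" by (simp add: of_nat_p)
  finally show ?thesis by (metis add_implies_diff diff_0)
qed

lemma P_neg: "a \<in> prime_subfield \<Longrightarrow> (- a :: 'a) \<in> prime_subfield"
  unfolding prime_subfield_def by (metis neg_of_nat rangeE rangeI)

lemma P_diff: "a \<in> prime_subfield \<Longrightarrow> b \<in> prime_subfield \<Longrightarrow> (a - b :: 'a) \<in> prime_subfield"
  using P_add P_neg by (metis diff_conv_add_uminus)

lemma e_add: "a \<in> prime_subfield \<Longrightarrow> b \<in> prime_subfield \<Longrightarrow>
   zeta_pow p (a + b :: 'a) = zeta_pow p a * zeta_pow p b"
proof -
  assume "a \<in> prime_subfield" "b \<in> prime_subfield"
  then obtain i j where "a = of_nat i" "b = of_nat j" using P_of_nat by blast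
  hence "zeta_pow p (a + b) = cis (2 * pi * real (i + j) / real p)"
    using e_of_nat[of "i + j"] by simp
  also have "\<dots> = cis (2 * pi * real i / real p) * cis (2 * pi * real j / real p)"
    by (simp add: cis_mult add_divide_distrib distrib_left)
  finally show ?thesis using \<open>a = _\<close> \<open>b = _\<close> by (simp add: e_of_nat)
qed

lemma e_zero: "zeta_pow p (0::'a) = 1"
  using e_of_nat[of 0] by simp

lemma e_norm: "a \<in> prime_subfield \<Longrightarrow> cnj (zeta_pow p (a::'a)) * zeta_pow p a = 1"
proof -
  assume "a \<in> prime_subfield"
  then obtain i where "a = of_nat i" using P_of_nat by blast
  thus ?thesis by (simp add: e_of_nat cis_cnj cis_mult)
qed

lemma e_neg: "a \<in> prime_subfield \<Longrightarrow> zeta_pow p (- a :: 'a) = cnj (zeta_pow p a)"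
proof -
  assume a: "a \<in> prime_subfield"
  have 1: "zeta_pow p (- a) * zeta_pow p a = 1" using e_add[OF P_neg[OF a] a] e_zero by simp
  have 2: "cnj (zeta_pow p a) * zeta_pow p a = 1" using e_norm[OF a] .
  from 1 2 show ?thesis by (metis mult.assoc mult.commute mult_1_left mult_1_right)
qed

lemma e_diff: "a \<in> prime_subfield \<Longrightarrow> b \<in> prime_subfield \<Longrightarrow>
   zeta_pow p (a - b :: 'a) = zeta_pow p a * cnj (zeta_pow p b)"
  using e_add[OF _ P_neg] e_neg by (metis diff_conv_add_uminus)

lemma e_one: "a \<in> prime_subfield \<Longrightarrow> zeta_pow p (a::'a) = 1 \<Longrightarrow> a = 0"
proof -
  assume a: "a \<in> prime_subfield" and e1: "zeta_pow p a = 1"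
  then obtain i where i: "a = of_nat i" "i < p" using P_eq by auto
  hence "cis (2 * pi * real i / real p) = 1" using e1 by (simp add: e_of_nat)
  then obtain m :: int where "2 * pi * real i / real p = of_int m * (2 * pi)" by (auto simp: cis_eq_1_iff)
  hence "real i = of_int m * real p" using p_gt1 by (simp add: field_simps)
  hence "int i = m * int p" by (metis of_int_eq_iff of_int_mult of_int_of_nat_eq)
  with i(2) have "i = 0"
    by (metis (no_types, opaque_lifting) bot_nat_0.extremum_strict dvd_triv_right int_dvd_int_iff nat_dvd_not_less neq0_conv)
  thus ?thesis using i by simp
qed

definition psi :: "'a \<Rightarrow> complex" where "psi a = zeta_pow p (T a)"

lemma psi_add: "psi (a + b) = psi a * psi b"
  unfolding psi_def T_add by (rule e_add[OF T_in_P T_in_P])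

lemma psi_neg: "psi (- a) = cnj (psi a)"
  unfolding psi_def T_neg by (rule e_neg[OF T_in_P])

lemma psi_zero: "psi 0 = 1"
  unfolding psi_def T_zero by (rule e_zero)

lemma psi_norm: "cnj (psi a) * psi a = 1"
  unfolding psi_def by (rule e_norm[OF T_in_P])

lemma sum_psi: "(\<Sum>u\<in>UNIV. psi u) = 0"
proof -
  obtain b where b: "T b \<noteq> 0" using T_nontriv by blast
  have "(\<Sum>u\<in>UNIV. psi u) = (\<Sum>u\<in>UNIV. psi (u + b))"
    by (rule sum.reindex_bij_witness[of _ "\<lambda>u. u + b" "\<lambda>u. u - b"]) auto
  also have "\<dots> = psi b * (\<Sum>u\<in>UNIV. psi u)"
    by (simp add: psi_add sum_distrib_left mult.commute)
  finally have "(1 - psi b) * (\<Sum>u\<in>UNIV. psi u) = 0" by (simp add: algebra_simps)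
  moreover have "psi b \<noteq> 1" using e_one[OF T_in_P] b unfolding psi_def by blast
  ultimately show ?thesis by simp
qed

lemma orth: "(\<Sum>u\<in>UNIV. psi (a * u)) = (if a = 0 then of_nat CARD('a) else 0)"
proof (cases "a = 0")
  case True thus ?thesis by (simp add: psi_zero)
next
  case False
  have "(\<Sum>u\<in>UNIV. psi (a * u)) = (\<Sum>u\<in>UNIV. psi u)"
    by (rule sum.reindex_bij_witness[of _ "\<lambda>u. u / a" "\<lambda>u. a * u"]) (use False in auto)
  thus ?thesis using False sum_psi by simp
qed

definition R :: "((complex, 'a) vec, 'a) vec \<Rightarrow> 'a \<Rightarrow> 'a \<Rightarrow> complex" where
  "R A x \<mu> = (\<Sum>z\<in>UNIV. A $ x $ z * psi (- (\<mu> * z)))"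

lemma inversion: "A $ x $ y = (\<Sum>\<mu>\<in>UNIV. R A x \<mu> * psi (\<mu> * y)) / of_nat CARD('a)"
proof -
  have "(\<Sum>\<mu>\<in>UNIV. R A x \<mu> * psi (\<mu> * y)) = (\<Sum>\<mu>\<in>UNIV. \<Sum>z\<in>UNIV. A $ x $ z * psi ((y - z) * \<mu>))"
    unfolding R_def sum_distrib_right
    by (intro sum.cong refl) (simp add: mult.assoc flip: psi_add, simp add: algebra_simps)
  also have "\<dots> = (\<Sum>z\<in>UNIV. A $ x $ z * (\<Sum>\<mu>\<in>UNIV. psi ((y - z) * \<mu>)))"
    by (subst sum.swap) (simp add: sum_distrib_left)
  also have "\<dots> = (\<Sum>z\<in>UNIV. if z = y then A $ x $ z * of_nat CARD('a) else 0)"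
    by (intro sum.cong refl) (simp add: orth)
  also have "\<dots> = A $ x $ y * of_nat CARD('a)" by simp
  finally show ?thesis by simp
qed

lemma R_mult: "R (A ** B) x \<mu> = (\<Sum>k\<in>UNIV. A $ x $ k * R B k \<mu>)"
  unfolding R_def matrix_matrix_mult_def
  by (simp add: sum_distrib_right sum_distrib_left mult.assoc) (rule sum.swap)

lemma R_scale: "R (c *\<^sub>R A) x \<mu> = of_real c * R A x \<mu>"
  unfolding R_def vector_scaleR_component by (simp add: sum_distrib_left scaleR_conv_of_real mult.assoc)

end

locale ctx2 = ctx p n ty for p n :: nat and ty :: "'a::{field,finite} itself" +
  fixes f :: "'a \<Rightarrow> 'a"
  assumes fP: "\<forall>x. f x \<in> prime_subfield"
begin

abbreviation "M \<equiv> plat_matrix p f"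
abbreviation "W \<equiv> walsh p n f"

lemma walsh_eq: "W \<mu> = (\<Sum>x\<in>UNIV. zeta_pow p (f x) * psi (- (\<mu> * x)))"
  unfolding walsh_def
  by (intro sum.cong refl)
     (simp add: T_def[symmetric] e_diff[OF fP[rule_format] T_in_P] psi_def[symmetric] psi_neg)

lemma M_entry: "M $ x $ y = zeta_pow p (f (x + y))"
  by (simp add: plat_matrix_def)

lemma R_M: "R M k \<mu> = psi (\<mu> * k) * W \<mu>"
proof -
  have "R M k \<mu> = (\<Sum>z\<in>UNIV. zeta_pow p (f (k + z)) * psi (- (\<mu> * z)))"
    by (simp add: R_def M_entry)
  also have "\<dots> = (\<Sum>w\<in>UNIV. zeta_pow p (f w) * psi (- (\<mu> * (w - k))))"
    by (rule sum.reindex_bij_witness[of _ "\<lambda>w. w - k" "\<lambda>z. k + z"]) auto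
  also have "\<dots> = (\<Sum>w\<in>UNIV. psi (\<mu> * k) * (zeta_pow p (f w) * psi (- (\<mu> * w))))"
  proof (intro sum.cong refl)
    fix w
    have "- (\<mu> * (w - k)) = \<mu> * k + - (\<mu> * w)" by (simp add: algebra_simps)
    hence "psi (- (\<mu> * (w - k))) = psi (\<mu> * k) * psi (- (\<mu> * w))" by (metis psi_add)
    thus "zeta_pow p (f w) * psi (- (\<mu> * (w - k))) = psi (\<mu> * k) * (zeta_pow p (f w) * psi (- (\<mu> * w)))"
      by (simp add: psi_add)
  qed
  also have "\<dots> = psi (\<mu> * k) * W \<mu>" by (simp add: walsh_eq sum_distrib_left)
  finally show ?thesis .
qed

lemma R_Ms: "R (conj_transpose M) k \<nu> = cnj (R M k (- \<nu>))"
  unfolding R_def conj_transpose_def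
  by (simp add: M_entry psi_neg[symmetric] add.commute)

lemma R_MMs: "R (M ** conj_transpose M) x (- \<mu>) = cnj (W \<mu>) * psi (\<mu> * x) * W \<mu>"
proof -
  have "R (M ** conj_transpose M) x (- \<mu>) = (\<Sum>k\<in>UNIV. M $ x $ k * (psi (- (\<mu> * k)) * cnj (W \<mu>)))"
    by (simp add: R_mult R_Ms R_M psi_neg)
  also have "\<dots> = cnj (W \<mu>) * R M x \<mu>"
    by (simp add: R_def sum_distrib_left mult_ac)
  finally show ?thesis by (simp add: R_M mult_ac)
qed

lemma R_MMsM: "R (M ** conj_transpose M ** M) x \<mu> = W \<mu> * cnj (W \<mu>) * W \<mu> * psi (\<mu> * x)"
proof -
  have "R (M ** conj_transpose M ** M) x \<mu> = (\<Sum>k\<in>UNIV. (M ** conj_transpose M) $ x $ k * (psi (\<mu> * k) * W \<mu>))"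
    by (simp add: R_mult R_M)
  also have "\<dots> = W \<mu> * R (M ** conj_transpose M) x (- \<mu>)"
    by (simp add: R_def sum_distrib_left mult_ac)
  finally show ?thesis by (simp add: R_MMs mult_ac)
qed

lemma matrix_iff:
  "(M ** conj_transpose M ** M = c *\<^sub>R M) \<longleftrightarrow> (\<forall>\<mu>. W \<mu> * cnj (W \<mu>) * W \<mu> = of_real c * W \<mu>)"
proof
  assume H: "M ** conj_transpose M ** M = c *\<^sub>R M"
  show "\<forall>\<mu>. W \<mu> * cnj (W \<mu>) * W \<mu> = of_real c * W \<mu>"
  proof
    fix \<mu>
    have "R (M ** conj_transpose M ** M) 0 \<mu> = R (c *\<^sub>R M) 0 \<mu>" using H by (rule arg_cong)
    thus "W \<mu> * cnj (W \<mu>) * W \<mu> = of_real c * W \<mu>"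
      by (simp add: R_MMsM R_scale R_M psi_zero)
  qed
next
  assume H: "\<forall>\<mu>. W \<mu> * cnj (W \<mu>) * W \<mu> = of_real c * W \<mu>"
  have "R (M ** conj_transpose M ** M) x \<mu> = R (c *\<^sub>R M) x \<mu>" for x \<mu>
    unfolding R_MMsM R_scale R_M using H[rule_format, of \<mu>] by (simp only: mult.assoc mult.commute mult.left_commute)
  hence "(M ** conj_transpose M ** M) $ x $ y = (c *\<^sub>R M) $ x $ y" for x y
    by (subst (1 2) inversion) (simp only:)
  thus "M ** conj_transpose M ** M = c *\<^sub>R M" by (simp only: vec_eq_iff) blast
qed

end

lemma pointwise:
  fixes w :: complex and r :: real
  assumes "r \<ge> 0"
  shows "(cmod w \<in> {0, r}) \<longleftrightarrow> w * cnj w * w = of_real (r ^ 2) * w"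
proof -
  have "w * cnj w * w = of_real (cmod w ^ 2) * w" by (simp only: complex_norm_square)
  hence "w * cnj w * w = of_real (r ^ 2) * w \<longleftrightarrow> w = 0 \<or> cmod w ^ 2 = r ^ 2"
    by (metis mult_cancel_right of_real_eq_iff)
  also have "\<dots> \<longleftrightarrow> cmod w = 0 \<or> cmod w = r"
    using assms by (simp add: power2_eq_iff_nonneg)
  finally show ?thesis by auto
qed

theorem mainTheorem7:
  fixes p n s :: nat and f :: "'a::{field,finite} \<Rightarrow> 'a"
  assumes "prime p" and "n \<ge> 1" and "CARD('a) = p ^ n"
    and "\<forall>x. f x \<in> prime_subfield"
  shows "plateaued p n s f \<longleftrightarrow>
    plat_matrix p f ** conj_transpose (plat_matrix p f) ** plat_matrix p f
      = (of_nat p ^ (n + s)) *\<^sub>R plat_matrix p f"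
proof -
  interpret ctx2 p n "TYPE('a)" f
    using assms by unfold_locales auto
  define r where "r = real p powr (real (n + s) / 2)"
  have r0: "r \<ge> 0" by (simp add: r_def)
  have r2: "r ^ 2 = of_nat p ^ (n + s)"
  proof -
    have pp: "real p > 0" using p_gt1 by simp
    have "r ^ 2 = real p powr (of_nat 2 * (real (n + s) / 2))"
      unfolding r_def by (rule powr_power) (use pp in simp)
    also have "of_nat 2 * (real (n + s) / 2) = real (n + s)" by simp
    also have "real p powr real (n + s) = real p ^ (n + s)" by (rule powr_realpow[OF pp])
    finally show ?thesis by simp
  qed
  have "plateaued p n s f \<longleftrightarrow> (\<forall>\<mu>. cmod (W \<mu>) \<in> {0, r})"
    unfolding plateaued_def r_def ..
  also have "\<dots> \<longleftrightarrow> (\<forall>\<mu>. W \<mu> * cnj (W \<mu>) * W \<mu> = of_real (r ^ 2) * W \<mu>)"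
    by (simp only: pointwise[OF r0])
  also have "\<dots> \<longleftrightarrow> plat_matrix p f ** conj_transpose (plat_matrix p f) ** plat_matrix p f
      = (of_nat p ^ (n + s)) *\<^sub>R plat_matrix p f"
    unfolding r2 by (rule matrix_iff[symmetric])
  finally show ?thesis .
qed

end
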